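(* Let $p\geq 1$, $\vec n\in\mathbb N_0^p$, $N\in\mathbb N_0$ with $|\vec n|\le N$, and let $\alpha_1,\dots,\alpha_p,\beta,x\in\mathbb R$ be such that all Pochhammer symbols appearing in denominators below are nonzero. Then $$\sum_{l_1=0}^{n_1}\cdots\sum_{l_p=0}^{n_p}\frac{(-N)_{l_1+\cdots+l_p}(x)_{l_1+\cdots+l_p}}{(x+\beta+2)_{l_1+\cdots+l_p}}C^{l_1,\dots,l_p}_{\vec n}=\frac{(\beta+2)_{|\vec n|-1}(-N)_{|\vec n|}}{(x+\beta+2)_{|\vec n|}\prod_{q=1}^p(\alpha_q+\beta+|\vec n|+1)_{n_q}}\Big((x+\beta+|\vec n|+1)\prod_{q=1}^p(\alpha_q-x+1)_{n_q}-x\prod_{q=1}^p(\alpha_q-x)_{n_q}\Big).$$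
   Context: $(a)_m=a(a+1)\cdots(a+m-1)$, $(a)_0=1$, and for $m\ge1$, $(a)_{m-1}$ is as usual; $|\vec n|=n_1+\cdots+n_p$. The coefficients are $$C^{l_1,\dots,l_p}_{\vec n}=\frac{(-N)_{|\vec n|}}{(-N)_{l_1+\cdots+l_p}}\prod_{i=1}^p\frac{(\alpha_i+1)_{n_i}}{(\alpha_i+\beta+|\vec n|+1)_{n_i}}\frac{(-n_i)_{l_i}}{l_i!}\frac{(\alpha_i+\beta+\sum_{k=1}^i n_k+1)_{\sum_{j=i}^p l_j}}{(\alpha_i+1)_{\sum_{j=i}^p l_j}}\prod_{i=1}^{p-1}\frac{(\alpha_i+n_i+1)_{\sum_{j=i+1}^p l_j}}{(\alpha_i+\beta+\sum_{k=1}^i n_k+1)_{\sum_{j=i+1}^p l_j}}.$$ *)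

theory Defs
  imports Complex_Main
begin

text \<open>Multi-indices are functions nat => nat, with components indexed by 1..p.
  The summation range of the theorem: all l with 0 <= l_i <= n_i for i in 1..p
  (and l_i = 0 outside 1..p, so the set is finite).\<close>
definition lbox :: "nat \<Rightarrow> (nat \<Rightarrow> nat) \<Rightarrow> (nat \<Rightarrow> nat) set" where
  "lbox p n = {l. (\<forall>i\<in>{1..p}. l i \<le> n i) \<and> (\<forall>i. i \<notin> {1..p} \<longrightarrow> l i = 0)}"

definition absn :: "nat \<Rightarrow> (nat \<Rightarrow> nat) \<Rightarrow> nat" where
  "absn p n = (\<Sum>i=1..p. n i)"

definition Ccoef :: "nat \<Rightarrow> nat \<Rightarrow> (nat \<Rightarrow> real) \<Rightarrow> real \<Rightarrow> (nat \<Rightarrow> nat) \<Rightarrow> (nat \<Rightarrow> nat) \<Rightarrow> real" where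
  "Ccoef p N \<alpha> \<beta> n l =
     pochhammer (- real N) (\<Sum>i=1..p. n i) / pochhammer (- real N) (\<Sum>i=1..p. l i)
   * (\<Prod>i=1..p.
        pochhammer (\<alpha> i + 1) (n i) / pochhammer (\<alpha> i + \<beta> + real (\<Sum>k=1..p. n k) + 1) (n i)
      * (pochhammer (- real (n i)) (l i) / fact (l i))
      * (pochhammer (\<alpha> i + \<beta> + real (\<Sum>k=1..i. n k) + 1) (\<Sum>j=i..p. l j)
         / pochhammer (\<alpha> i + 1) (\<Sum>j=i..p. l j)))
   * (\<Prod>i=1..p-1.
        pochhammer (\<alpha> i + real (n i) + 1) (\<Sum>j=i+1..p. l j)
        / pochhammer (\<alpha> i + \<beta> + real (\<Sum>k=1..i. n k) + 1) (\<Sum>j=i+1..p. l j))"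

end

theory Submission
  imports Defs
begin



lemma vand_aux:
  fixes P Q c a t :: real
  assumes "Q \<noteq> 0" "c \<noteq> 0" "c + t \<noteq> 0"
  shows "P / Q - (a / c) * (P / (Q * (c + t) / c)) = P * (c - a + t) / (Q * (c + t))"
proof -
  have "Q * (c + t) \<noteq> 0" using assms by simp
  then show ?thesis using assms
    by (simp add: divide_simps) (simp add: algebra_simps)
qed

lemma vand:
  fixes a c :: real
  assumes "pochhammer c m \<noteq> 0"
  shows "(\<Sum>i\<le>m. (-1)^i * real (m choose i) * pochhammer a i / pochhammer c i)
         = pochhammer (c - a) m / pochhammer c m"
  using assms
proof (induction m arbitrary: a c)
  case 0
  then show ?case by simp
next
  case (Suc m)
  have c0: "c \<noteq> 0" and c1: "pochhammer (c+1) m \<noteq> 0"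
    using Suc.prems by (simp_all add: pochhammer_rec)
  have cm: "c + real m \<noteq> 0" using Suc.prems by (simp add: pochhammer_Suc)
  have cm0: "pochhammer c m \<noteq> 0" using Suc.prems pochhammer_neq_0_mono by fastforce
  define F where "F = (\<lambda>m i. (-1)^i * real (m choose i) * pochhammer a i / pochhammer c i)"
  have s1: "(\<Sum>i\<le>Suc m. F (Suc m) i) = F (Suc m) 0 + (\<Sum>i\<le>m. F (Suc m) (Suc i))"
    by (rule sum.atMost_Suc_shift)
  have s2: "(\<Sum>i\<le>m. F (Suc m) (Suc i)) = (\<Sum>i\<le>m. F m (Suc i)) + (\<Sum>i\<le>m. (-1)^(Suc i) * real (m choose i) * pochhammer a (Suc i) / pochhammer c (Suc i))"
    unfolding F_def by (simp add: sum.distrib[symmetric] algebra_simps diff_divide_distrib)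
  have s3: "(\<Sum>i\<le>m. (-1)^(Suc i) * real (m choose i) * pochhammer a (Suc i) / pochhammer c (Suc i))
      = - (a / c) * (\<Sum>i\<le>m. (-1)^i * real (m choose i) * pochhammer (a+1) i / pochhammer (c+1) i)"
    by (simp add: sum_distrib_left pochhammer_rec c0 field_simps)
  have s4: "(\<Sum>i\<le>m. (-1)^i * real (m choose i) * pochhammer (a+1) i / pochhammer (c+1) i)
      = pochhammer (c - a) m / pochhammer (c+1) m"
    using Suc.IH[OF c1, of "a+1"] by simp
  have s5: "F (Suc m) 0 + (\<Sum>i\<le>m. F m (Suc i)) = (\<Sum>i\<le>m. F m i)"
  proof -
    have "(\<Sum>i\<le>Suc m. F m i) = F m 0 + (\<Sum>i\<le>m. F m (Suc i))"
      by (rule sum.atMost_Suc_shift)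
    moreover have "(\<Sum>i\<le>Suc m. F m i) = (\<Sum>i\<le>m. F m i)" by (simp add: F_def)
    ultimately show ?thesis by (simp add: F_def)
  qed
  have s6: "(\<Sum>i\<le>m. F m i) = pochhammer (c - a) m / pochhammer c m"
    using Suc.IH[OF cm0] by (simp add: F_def)
  have "(\<Sum>i\<le>Suc m. F (Suc m) i) = pochhammer (c - a) m / pochhammer c m
        - (a / c) * (pochhammer (c - a) m / pochhammer (c+1) m)"
    using s1 s2 s3 s4 s5 s6 by simp
  also have "\<dots> = pochhammer (c - a) (Suc m) / pochhammer c (Suc m)"
  proof -
    have r: "pochhammer (c+1) m = pochhammer c m * (c + real m) / c"
      using c0 by (metis nonzero_mult_div_cancel_left pochhammer_Suc pochhammer_rec)
    show ?thesis unfolding r vand_aux[OF cm0 c0 cm]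
      by (simp add: pochhammer_Suc)
  qed
  finally show ?case by (simp add: F_def)
qed




lemma poch_neg_fact: "pochhammer (- real n) a / fact a = (-1)^a * real (n choose a)"
proof -
  have "(real n gchoose a) = (-1)^a * pochhammer (- real n) a / fact a"
    by (rule gbinomial_pochhammer)
  then show ?thesis by (simp add: binomial_gbinomial[symmetric])
qed

lemma poch_ne_mono: "pochhammer (c::real) n \<noteq> 0 \<Longrightarrow> k \<le> n \<Longrightarrow> pochhammer c k \<noteq> 0"
  using pochhammer_neq_0_mono by blast

lemma saal:
  fixes u w b :: real
  assumes hc: "pochhammer (u+b+1) n \<noteq> 0" and hw: "pochhammer w n \<noteq> 0"
  shows "(\<Sum>a\<le>n. pochhammer (-real n) a / fact a * pochhammer u a * pochhammer (w+b+real n) a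
            / (pochhammer (u+b+1) a * pochhammer w a))
       = pochhammer (b+1) n * pochhammer (w-u) n / (pochhammer (u+b+1) n * pochhammer w n)"
proof -
  define c where "c = u+b+1"
  define v where "v = w+b+real n"
  have cne: "\<And>k. k \<le> n \<Longrightarrow> pochhammer c k \<noteq> 0" using hc poch_ne_mono c_def by blast
  have wne: "\<And>k. k \<le> n \<Longrightarrow> pochhammer w k \<noteq> 0" using hw poch_ne_mono by blast
  define g where "g = (\<lambda>l j. (-1)^l * real (n choose l) * (pochhammer v l / pochhammer w l)
                        * ((-1)^j * real (l choose j) * pochhammer (b+1) j / pochhammer c j))"
  have "(\<Sum>a\<le>n. pochhammer (-real n) a / fact a * pochhammer u a * pochhammer (w+b+real n) a
            / (pochhammer (u+b+1) a * pochhammer w a))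
      = (\<Sum>l\<le>n. (-1)^l * real (n choose l) * (pochhammer v l / pochhammer w l) * (pochhammer u l / pochhammer c l))"
  proof (rule sum.cong[OF refl])
    fix l assume "l \<in> {..n}"
    have "pochhammer (-real n) l / fact l = (-1)^l * real (n choose l)" by (rule poch_neg_fact)
    then show "pochhammer (-real n) l / fact l * pochhammer u l * pochhammer (w+b+real n) l
            / (pochhammer (u+b+1) l * pochhammer w l)
          = (-1)^l * real (n choose l) * (pochhammer v l / pochhammer w l) * (pochhammer u l / pochhammer c l)"
      unfolding v_def c_def by (simp add: divide_inverse inverse_mult_distrib ac_simps)
  qed
  also have "\<dots> = (\<Sum>l\<le>n. \<Sum>j\<le>n. g l j)"
  proof (rule sum.cong[OF refl])
    fix l assume l: "l \<in> {..n}"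
    have "pochhammer u l / pochhammer c l = (\<Sum>j\<le>l. (-1)^j * real (l choose j) * pochhammer (b+1) j / pochhammer c j)"
      using vand[OF cne, of l "b+1"] l by (simp add: c_def)
    also have "\<dots> = (\<Sum>j\<le>n. (-1)^j * real (l choose j) * pochhammer (b+1) j / pochhammer c j)"
      using l by (intro sum.mono_neutral_left) auto
    finally show "(-1)^l * real (n choose l) * (pochhammer v l / pochhammer w l) * (pochhammer u l / pochhammer c l)
        = (\<Sum>j\<le>n. g l j)"
      by (simp add: g_def sum_distrib_left)
  qed
  also have "\<dots> = (\<Sum>j\<le>n. \<Sum>l\<le>n. g l j)" by (rule sum.swap)
  also have "\<dots> = (\<Sum>j\<le>n. (-1)^(n-j) * real (n choose j) * pochhammer (b+1) n * pochhammer v j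
                       / (pochhammer c j * pochhammer w n))"
  proof (rule sum.cong[OF refl])
    fix j assume j: "j \<in> {..n}"
    then have jn: "j \<le> n" by simp
    have "(\<Sum>l\<le>n. g l j) = (\<Sum>l\<in>{j..n}. g l j)"
      by (rule sum.mono_neutral_right) (auto simp: g_def)
    also have "\<dots> = (\<Sum>i\<le>n-j. g (j+i) j)"
    proof -
      have "(\<Sum>l\<in>{j..n}. g l j) = (\<Sum>i\<in>{0..n-j}. g (i+j) j)"
      proof -
        have "{j..n} = {0+j..(n-j)+j}" using jn by simp
        then show ?thesis by (simp only: sum.shift_bounds_cl_nat_ivl)
      qed
      then show ?thesis by (simp add: atMost_atLeast0 add.commute)
    qed
    also have "\<dots> = real (n choose j) * pochhammer (b+1) j / pochhammer c j * (pochhammer v j / pochhammer w j)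
         * (\<Sum>i\<le>n-j. (-1)^i * real ((n-j) choose i) * pochhammer (v + real j) i / pochhammer (w + real j) i)"
    proof -
      have "g (j+i) j = real (n choose j) * pochhammer (b+1) j / pochhammer c j * (pochhammer v j / pochhammer w j)
         * ((-1)^i * real ((n-j) choose i) * pochhammer (v + real j) i / pochhammer (w + real j) i)"
        if i: "i \<le> n - j" for i
      proof -
        have ch: "real (n choose (j+i)) * real ((j+i) choose j) = real (n choose j) * real ((n-j) choose i)"
        proof -
          have "(n choose (j+i)) * ((j+i) choose j) = (n choose j) * ((n-j) choose i)"
            using choose_mult[of j "j+i" n] i jn by simp
          then show ?thesis by (metis of_nat_mult)
        qed
        have pv: "pochhammer v (j+i) = pochhammer v j * pochhammer (v + real j) i" by (rule pochhammer_product')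
        have pw: "pochhammer w (j+i) = pochhammer w j * pochhammer (w + real j) i" by (rule pochhammer_product')
        have sg: "(-1::real)^(j+i) * (-1)^j = (-1)^i"
        proof -
          have a: "(-1::real)^j * (-1)^j = 1"
            by (simp add: power_mult_distrib[symmetric])
          have "(-1::real)^(j+i) * (-1)^j = (-1)^i * ((-1)^j * (-1)^j)" by (simp add: power_add)
          then show ?thesis using a by simp
        qed
        have "g (j+i) j = ((-1)^(j+i) * (-1)^j) * (real (n choose (j+i)) * real ((j+i) choose j))
           * (pochhammer (b+1) j * inverse (pochhammer c j)) * (pochhammer v j * inverse (pochhammer w j))
           * (pochhammer (v+real j) i * inverse (pochhammer (w+real j) i))"
          unfolding g_def pv pw by (simp add: divide_inverse inverse_mult_distrib ac_simps)
        also have "\<dots> = (-1)^i * (real (n choose j) * real ((n-j) choose i))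
           * (pochhammer (b+1) j * inverse (pochhammer c j)) * (pochhammer v j * inverse (pochhammer w j))
           * (pochhammer (v+real j) i * inverse (pochhammer (w+real j) i))"
          unfolding sg ch ..
        finally show ?thesis by (simp add: divide_inverse inverse_mult_distrib ac_simps)
      qed
      then show ?thesis by (simp add: sum_distrib_left)
    qed
    also have "(\<Sum>i\<le>n-j. (-1)^i * real ((n-j) choose i) * pochhammer (v + real j) i / pochhammer (w + real j) i)
         = pochhammer (w - v) (n-j) / pochhammer (w + real j) (n-j)"
    proof -
      have "pochhammer (w + real j) (n-j) \<noteq> 0"
        using hw pochhammer_product[OF jn, of w] by auto
      from vand[OF this, of "v + real j"] show ?thesis by simp
    qed
    also have "real (n choose j) * pochhammer (b+1) j / pochhammer c j * (pochhammer v j / pochhammer w j)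
         * (pochhammer (w - v) (n-j) / pochhammer (w + real j) (n-j))
       = (-1)^(n-j) * real (n choose j) * pochhammer (b+1) n * pochhammer v j
                       / (pochhammer c j * pochhammer w n)"
    proof -
      have wv: "pochhammer (w - v) (n-j) = (-1)^(n-j) * pochhammer (b + 1 + real j) (n-j)"
      proof -
        have "w - v = - (b + real n)" by (simp add: v_def)
        then have "pochhammer (w - v) (n-j) = (-1)^(n-j) * pochhammer (b + real n - real (n-j) + 1) (n-j)"
          using pochhammer_minus[of "b + real n" "n-j"] by simp
        also have "b + real n - real (n-j) + 1 = b + 1 + real j" using jn by (simp add: of_nat_diff)
        finally show ?thesis .
      qed
      have pb: "pochhammer (b+1) n = pochhammer (b+1) j * pochhammer (b+1+real j) (n-j)"
        by (rule pochhammer_product[OF jn])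
      have pw: "pochhammer w n = pochhammer w j * pochhammer (w+real j) (n-j)"
        by (rule pochhammer_product[OF jn])
      show ?thesis unfolding wv pb pw by (simp add: divide_inverse inverse_mult_distrib ac_simps)
    qed
    finally show "(\<Sum>l\<le>n. g l j) = (-1)^(n-j) * real (n choose j) * pochhammer (b+1) n * pochhammer v j
                       / (pochhammer c j * pochhammer w n)" .
  qed
  also have "\<dots> = pochhammer (b+1) n / pochhammer w n * (-1)^n *
          (\<Sum>j\<le>n. (-1)^j * real (n choose j) * pochhammer v j / pochhammer c j)"
  proof -
    have "(-1::real)^(n-j) = (-1)^n * (-1)^j" if "j \<le> n" for j
    proof -
      have a: "(-1::real)^j * (-1)^j = 1"
        by (simp add: power_mult_distrib[symmetric])
      have b: "(-1::real)^n = (-1)^(n-j) * (-1)^j" using that by (simp flip: power_add)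
      show ?thesis by (simp add: b mult.assoc a)
    qed
    then show ?thesis unfolding sum_distrib_left
      by (intro sum.cong refl) (simp add: divide_inverse inverse_mult_distrib ac_simps)
  qed
  also have "(\<Sum>j\<le>n. (-1)^j * real (n choose j) * pochhammer v j / pochhammer c j)
        = pochhammer (c - v) n / pochhammer c n"
    using vand[OF cne[OF order_refl]] by simp
  also have "pochhammer (c - v) n = (-1)^n * pochhammer (w - u) n"
  proof -
    have "c - v = (u - w) - real n + 1" by (simp add: c_def v_def)
    then show ?thesis by (simp add: pochhammer_minus')
  qed
  moreover have a: "(-1::real)^n * (-1)^n = 1"
    by (simp add: power_mult_distrib[symmetric])
  ultimately show ?thesis
    by (simp add: c_def divide_inverse inverse_mult_distrib ac_simps)
qed




lemma step_alg:
  fixes X Ds A1n A2s As B W Uu Wn Dn Ds2 :: real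
  assumes e1: "A1n * A2s = As * Wn" and e2: "Ds * Uu = Dn * Ds2"
    and nz: "As \<noteq> 0" "Wn \<noteq> 0" "Ds \<noteq> 0" "Uu \<noteq> 0" "A1n \<noteq> 0" "Dn \<noteq> 0" "Ds2 \<noteq> 0"
  shows "X / Ds * (A1n * A2s / As) * (B * W / (Uu * Wn)) = X / Ds2 * (B * W / Dn)"
proof -
  have "X / Ds * (A1n * A2s / As) * (B * W / (Uu * Wn)) = X * B * W * (A1n * A2s) / (As * Wn * (Ds * Uu))"
    using nz by (simp add: field_simps)
  also have "\<dots> = X * B * W / (Ds * Uu)" unfolding e1 using nz by simp
  also have "\<dots> = X / Ds2 * (B * W / Dn)" unfolding e2 using nz by (simp add: field_simps)
  finally show ?thesis .
qed

lemma step: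
  fixes x \<beta> \<alpha> :: real and n s :: nat
  assumes h1: "pochhammer (x+\<beta>+1) (n+s) \<noteq> 0" and h2: "pochhammer (\<alpha>+1) (n+s) \<noteq> 0"
    and h3: "pochhammer (\<alpha>+\<beta>+real n+1) s \<noteq> 0"
  shows "(\<Sum>a\<le>n. pochhammer x (a+s) / pochhammer (x+\<beta>+1) (a+s) *
            (pochhammer (\<alpha>+1) n * (pochhammer (-real n) a / fact a)
             * (pochhammer (\<alpha>+\<beta>+real n+1) (a+s) / pochhammer (\<alpha>+1) (a+s))
             * (pochhammer (\<alpha>+real n+1) s / pochhammer (\<alpha>+\<beta>+real n+1) s)))
       = pochhammer x s / pochhammer (x+(\<beta>+real n)+1) s
         * (pochhammer (\<beta>+1) n * pochhammer (\<alpha>-x+1) n / pochhammer (x+\<beta>+1) n)"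
proof -
  define u where "u = x + real s"
  define w where "w = \<alpha> + 1 + real s"
  define Kf where "Kf = pochhammer x s / pochhammer (x+\<beta>+1) s * (pochhammer (\<alpha>+1) n * pochhammer (\<alpha>+real n+1) s / pochhammer (\<alpha>+1) s)"
  have ps: "pochhammer z (a+s) = pochhammer z s * pochhammer (z + real s) a" for z :: real and a
    using pochhammer_product'[of z s a] by (simp add: add.commute)
  have Ds: "pochhammer (x+\<beta>+1) s \<noteq> 0" using h1 pochhammer_neq_0_mono by fastforce
  have As: "pochhammer (\<alpha>+1) s \<noteq> 0" using h2 pochhammer_neq_0_mono by fastforce
  have hsn1: "pochhammer (x+\<beta>+1) (n+s) = pochhammer (x+\<beta>+1) s * pochhammer (u+\<beta>+1) n"
    using ps[of "x+\<beta>+1" n] by (simp add: u_def algebra_simps)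
  have hsn2: "pochhammer (\<alpha>+1) (n+s) = pochhammer (\<alpha>+1) s * pochhammer w n"
    using ps[of "\<alpha>+1" n] by (simp add: w_def algebra_simps)
  have Uu: "pochhammer (u+\<beta>+1) n \<noteq> 0" using h1 hsn1 by auto
  have Wn: "pochhammer w n \<noteq> 0" using h2 hsn2 by auto
  have "(\<Sum>a\<le>n. pochhammer x (a+s) / pochhammer (x+\<beta>+1) (a+s) *
            (pochhammer (\<alpha>+1) n * (pochhammer (-real n) a / fact a)
             * (pochhammer (\<alpha>+\<beta>+real n+1) (a+s) / pochhammer (\<alpha>+1) (a+s))
             * (pochhammer (\<alpha>+real n+1) s / pochhammer (\<alpha>+\<beta>+real n+1) s)))
      = (\<Sum>a\<le>n. Kf * (pochhammer (-real n) a / fact a * pochhammer u a * pochhammer (w+\<beta>+real n) a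
            / (pochhammer (u+\<beta>+1) a * pochhammer w a)))"
  proof (rule sum.cong[OF refl])
    fix a
    have e: "w+\<beta>+real n = \<alpha>+\<beta>+real n+1 + real s" by (simp add: w_def)
    show "pochhammer x (a+s) / pochhammer (x+\<beta>+1) (a+s) *
            (pochhammer (\<alpha>+1) n * (pochhammer (-real n) a / fact a)
             * (pochhammer (\<alpha>+\<beta>+real n+1) (a+s) / pochhammer (\<alpha>+1) (a+s))
             * (pochhammer (\<alpha>+real n+1) s / pochhammer (\<alpha>+\<beta>+real n+1) s))
        = Kf * (pochhammer (-real n) a / fact a * pochhammer u a * pochhammer (w+\<beta>+real n) a
            / (pochhammer (u+\<beta>+1) a * pochhammer w a))"
      unfolding ps Kf_def e using h3
      by (simp add: u_def w_def divide_inverse inverse_mult_distrib ac_simps)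
  qed
  also have "\<dots> = Kf * (pochhammer (\<beta>+1) n * pochhammer (w-u) n / (pochhammer (u+\<beta>+1) n * pochhammer w n))"
    unfolding sum_distrib_left[symmetric] saal[OF Uu Wn] ..
  also have "\<dots> = pochhammer x s / pochhammer (x+(\<beta>+real n)+1) s
         * (pochhammer (\<beta>+1) n * pochhammer (\<alpha>-x+1) n / pochhammer (x+\<beta>+1) n)"
  proof -
    have wu: "w - u = \<alpha> - x + 1" by (simp add: u_def w_def)
    have e1: "pochhammer (\<alpha>+1) n * pochhammer (\<alpha>+real n+1) s = pochhammer (\<alpha>+1) s * pochhammer w n"
      using pochhammer_product'[of "\<alpha>+1" n s] hsn2 by (simp add: add.commute add.left_commute)
    have e2: "pochhammer (x+\<beta>+1) s * pochhammer (u+\<beta>+1) n = pochhammer (x+\<beta>+1) n * pochhammer (x+(\<beta>+real n)+1) s"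
      using pochhammer_product'[of "x+\<beta>+1" n s] hsn1 by (simp add: add.commute add.left_commute)
    have A1n: "pochhammer (\<alpha>+1) n \<noteq> 0" using h2 pochhammer_neq_0_mono by fastforce
    have Dn: "pochhammer (x+\<beta>+1) n \<noteq> 0" using h1 pochhammer_neq_0_mono by fastforce
    have Ds2: "pochhammer (x+(\<beta>+real n)+1) s \<noteq> 0" using e2 Ds Uu by auto
    show ?thesis unfolding Kf_def wu
      by (rule step_alg[OF e1 e2 As Wn Ds Uu A1n Dn Ds2])
  qed
  finally show ?thesis .
qed




definition Kc :: "nat \<Rightarrow> (nat \<Rightarrow> real) \<Rightarrow> real \<Rightarrow> (nat \<Rightarrow> nat) \<Rightarrow> (nat \<Rightarrow> nat) \<Rightarrow> real" where
  "Kc p \<alpha> \<beta> n l =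
     (\<Prod>i=1..p.
        pochhammer (\<alpha> i + 1) (n i)
      * (pochhammer (- real (n i)) (l i) / fact (l i))
      * (pochhammer (\<alpha> i + \<beta> + real (\<Sum>k=1..i. n k) + 1) (\<Sum>j=i..p. l j)
         / pochhammer (\<alpha> i + 1) (\<Sum>j=i..p. l j)))
   * (\<Prod>i=1..p-1.
        pochhammer (\<alpha> i + real (n i) + 1) (\<Sum>j=i+1..p. l j)
        / pochhammer (\<alpha> i + \<beta> + real (\<Sum>k=1..i. n k) + 1) (\<Sum>j=i+1..p. l j))"

definition lcons :: "nat \<Rightarrow> (nat \<Rightarrow> nat) \<Rightarrow> nat \<Rightarrow> nat" where
  "lcons a l = (\<lambda>i. if i = 0 then 0 else if i = 1 then a else l (i - 1))"

definition ltail :: "(nat \<Rightarrow> nat) \<Rightarrow> nat \<Rightarrow> nat" where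
  "ltail l = (\<lambda>i. if i = 0 then 0 else l (Suc i))"

lemma finite_lbox: "finite (lbox p n)"
proof -
  let ?M = "\<Sum>i=1..p. n i"
  have "lbox p n \<subseteq> {f. \<forall>x. (x \<in> {1..p} \<longrightarrow> f x \<in> {0..?M}) \<and> (x \<notin> {1..p} \<longrightarrow> f x = 0)}"
  proof
    fix l assume l: "l \<in> lbox p n"
    have "l x \<le> ?M" if "x \<in> {1..p}" for x
    proof -
      have "l x \<le> n x" using l that by (auto simp: lbox_def)
      also have "n x \<le> ?M" using that by (intro member_le_sum) auto
      finally show ?thesis .
    qed
    then show "l \<in> {f. \<forall>x. (x \<in> {1..p} \<longrightarrow> f x \<in> {0..?M}) \<and> (x \<notin> {1..p} \<longrightarrow> f x = 0)}"
      using l by (auto simp: lbox_def)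
  qed
  moreover have "finite {f. \<forall>x. (x \<in> {1..p} \<longrightarrow> f x \<in> {0..?M}) \<and> (x \<notin> {1..p} \<longrightarrow> f x = (0::nat))}"
    by (rule finite_set_of_finite_funs) auto
  ultimately show ?thesis by (rule finite_subset)
qed

lemma lcons_in: "a \<le> n 1 \<Longrightarrow> l \<in> lbox p (\<lambda>i. n (Suc i)) \<Longrightarrow> lcons a l \<in> lbox (Suc p) n"
  unfolding lbox_def lcons_def
  apply (auto)
  subgoal for i by (cases i) (auto split: if_splits)
  subgoal for i by (cases i) (auto split: if_splits)
  done

lemma lbox_zero: "l \<in> lbox p n \<Longrightarrow> l 0 = 0"
  by (auto simp: lbox_def)

lemma lbox_Suc_bij:
  "bij_betw (\<lambda>(a,l). lcons a l) (SIGMA a:{..n 1}. lbox p (\<lambda>i. n (Suc i))) (lbox (Suc p) n)"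
proof (rule bij_betw_byWitness[where f' = "\<lambda>l. (l 1, ltail l)"])
  show "\<forall>x\<in>(SIGMA a:{..n 1}. lbox p (\<lambda>i. n (Suc i))). (\<lambda>l. (l 1, ltail l)) ((\<lambda>(a,l). lcons a l) x) = x"
  proof
    fix x assume x: "x \<in> (SIGMA a:{..n 1}. lbox p (\<lambda>i. n (Suc i)))"
    obtain a l where xe: "x = (a, l)" by fastforce
    have "l 0 = 0" using x xe lbox_zero by blast
    then show "(\<lambda>l. (l 1, ltail l)) ((\<lambda>(a,l). lcons a l) x) = x"
      unfolding xe by (auto simp: lcons_def ltail_def fun_eq_iff)
  qed
  show "\<forall>y\<in>lbox (Suc p) n. (\<lambda>(a,l). lcons a l) ((\<lambda>l. (l 1, ltail l)) y) = y"
  proof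
    fix l assume l: "l \<in> lbox (Suc p) n"
    then have "l 0 = 0" by (rule lbox_zero)
    then show "(\<lambda>(a,l). lcons a l) ((\<lambda>l. (l 1, ltail l)) l) = l"
      by (auto simp: lcons_def ltail_def fun_eq_iff)
  qed
  show "(\<lambda>(a,l). lcons a l) ` (SIGMA a:{..n 1}. lbox p (\<lambda>i. n (Suc i))) \<subseteq> lbox (Suc p) n"
    using lcons_in by auto
  show "(\<lambda>l. (l 1, ltail l)) ` lbox (Suc p) n \<subseteq> (SIGMA a:{..n 1}. lbox p (\<lambda>i. n (Suc i)))"
  proof clarify
    fix l assume l: "l \<in> lbox (Suc p) n"
    have "l 1 \<le> n 1" using l by (auto simp: lbox_def)
    moreover have "ltail l \<in> lbox p (\<lambda>i. n (Suc i))"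
      using l unfolding lbox_def ltail_def
      by auto
    ultimately show "l 1 \<in> {..n 1} \<and> ltail l \<in> lbox p (\<lambda>i. n (Suc i))" by auto
  qed
qed

lemma sum_lbox_Suc:
  "sum f (lbox (Suc p) n) = (\<Sum>a\<le>n 1. \<Sum>l\<in>lbox p (\<lambda>i. n (Suc i)). f (lcons a l))"
proof -
  have "sum f (lbox (Suc p) n) = sum (f \<circ> (\<lambda>(a,l). lcons a l)) (SIGMA a:{..n 1}. lbox p (\<lambda>i. n (Suc i)))"
    using sum.reindex_bij_betw[OF lbox_Suc_bij, of f] by simp
  also have "\<dots> = (\<Sum>a\<le>n 1. \<Sum>l\<in>lbox p (\<lambda>i. n (Suc i)). f (lcons a l))"
    by (simp add: sum.cartesian_product split_def comp_def)
  finally show ?thesis .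
qed

lemma sum_shift1: "(\<Sum>k=1..Suc i. g k) = g 1 + (\<Sum>k=1..i. g (Suc k))"
  for g :: "nat \<Rightarrow> 'a::comm_monoid_add"
proof -
  have "(\<Sum>k=1..Suc i. g k) = g 1 + (\<Sum>k=Suc 1..Suc i. g k)"
    by (rule sum.atLeast_Suc_atMost) simp
  also have "(\<Sum>k=Suc 1..Suc i. g k) = (\<Sum>k=1..i. g (Suc k))"
    by (rule sum.shift_bounds_cl_Suc_ivl)
  finally show ?thesis .
qed

lemma prod_shift1: "(\<Prod>k=1..Suc i. g k) = g 1 * (\<Prod>k=1..i. g (Suc k))"
  for g :: "nat \<Rightarrow> 'a::comm_monoid_mult"
proof -
  have "(\<Prod>k=1..Suc i. g k) = g 1 * (\<Prod>k=Suc 1..Suc i. g k)"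
    by (rule prod.atLeast_Suc_atMost) simp
  also have "(\<Prod>k=Suc 1..Suc i. g k) = (\<Prod>k=1..i. g (Suc k))"
    by (rule prod.shift_bounds_cl_Suc_ivl)
  finally show ?thesis .
qed

lemma lcons_Suc: "1 \<le> i \<Longrightarrow> lcons a l (Suc i) = l i"
  by (simp add: lcons_def)

lemma lcons_sum_tail: "1 \<le> i \<Longrightarrow> (\<Sum>j=Suc i..Suc p. lcons a l j) = (\<Sum>j=i..p. l j)"
  unfolding sum.shift_bounds_cl_Suc_ivl by (rule sum.cong) (auto simp: lcons_Suc)

lemma lcons_sum_all: "(\<Sum>j=1..Suc p. lcons a l j) = a + (\<Sum>j=1..p. l j)"
  unfolding sum_shift1 by (simp add: lcons_def)

lemma arg_shift: "c + \<beta> + real (\<Sum>k=1..Suc i. n k) + 1 = c + (\<beta> + real (n 1)) + real (\<Sum>k=1..i. n (Suc k)) + 1"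
  unfolding sum_shift1 by simp

lemma Kc_Suc:
  fixes \<alpha> :: "nat \<Rightarrow> real" and p :: nat and l :: "nat \<Rightarrow> nat"
  defines "S \<equiv> (\<Sum>j=1..p. l j)"
  shows "Kc (Suc p) \<alpha> \<beta> n (lcons a l) =
    (pochhammer (\<alpha> 1 + 1) (n 1) * (pochhammer (-real (n 1)) a / fact a)
     * (pochhammer (\<alpha> 1+\<beta>+real (n 1)+1) (a+S) / pochhammer (\<alpha> 1+1) (a+S))
     * (pochhammer (\<alpha> 1+real (n 1)+1) S / pochhammer (\<alpha> 1+\<beta>+real (n 1)+1) S))
    * Kc p (\<lambda>i. \<alpha> (Suc i)) (\<beta> + real (n 1)) (\<lambda>i. n (Suc i)) l"
proof -
  define f where "f = (\<lambda>i. pochhammer (\<alpha> i + 1) (n i)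
      * (pochhammer (- real (n i)) (lcons a l i) / fact (lcons a l i))
      * (pochhammer (\<alpha> i + \<beta> + real (\<Sum>k=1..i. n k) + 1) (\<Sum>j=i..Suc p. lcons a l j)
         / pochhammer (\<alpha> i + 1) (\<Sum>j=i..Suc p. lcons a l j)))"
  define h where "h = (\<lambda>i. pochhammer (\<alpha> i + real (n i) + 1) (\<Sum>j=i+1..Suc p. lcons a l j)
        / pochhammer (\<alpha> i + \<beta> + real (\<Sum>k=1..i. n k) + 1) (\<Sum>j=i+1..Suc p. lcons a l j))"
  define f' where "f' = (\<lambda>i. pochhammer (\<alpha> (Suc i) + 1) (n (Suc i))
      * (pochhammer (- real (n (Suc i))) (l i) / fact (l i))
      * (pochhammer (\<alpha> (Suc i) + (\<beta> + real (n 1)) + real (\<Sum>k=1..i. n (Suc k)) + 1) (\<Sum>j=i..p. l j)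
         / pochhammer (\<alpha> (Suc i) + 1) (\<Sum>j=i..p. l j)))"
  define h' where "h' = (\<lambda>i. pochhammer (\<alpha> (Suc i) + real (n (Suc i)) + 1) (\<Sum>j=i+1..p. l j)
        / pochhammer (\<alpha> (Suc i) + (\<beta> + real (n 1)) + real (\<Sum>k=1..i. n (Suc k)) + 1) (\<Sum>j=i+1..p. l j))"
  have K1: "Kc (Suc p) \<alpha> \<beta> n (lcons a l) = (\<Prod>i=1..Suc p. f i) * (\<Prod>i=1..p. h i)"
    unfolding Kc_def f_def h_def by simp
  have K2: "Kc p (\<lambda>i. \<alpha> (Suc i)) (\<beta> + real (n 1)) (\<lambda>i. n (Suc i)) l = (\<Prod>i=1..p. f' i) * (\<Prod>i=1..p-1. h' i)"
    unfolding Kc_def f'_def h'_def by simp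
  have P1: "(\<Prod>i=1..Suc p. f i) = f 1 * (\<Prod>i=1..p. f' i)"
    unfolding prod_shift1
  proof (intro arg_cong2[where f="(*)"] refl prod.cong)
    fix i assume i: "i \<in> {1..p}"
    then have i1: "1 \<le> i" by simp
    show "f (Suc i) = f' i"
      unfolding f_def f'_def lcons_Suc[OF i1] lcons_sum_tail[OF i1] arg_shift ..
  qed
  have f1: "f 1 = pochhammer (\<alpha> 1 + 1) (n 1) * (pochhammer (-real (n 1)) a / fact a)
     * (pochhammer (\<alpha> 1+\<beta>+real (n 1)+1) (a+S) / pochhammer (\<alpha> 1+1) (a+S))"
    unfolding f_def lcons_sum_all S_def by (simp add: lcons_def)
  have h1: "h 1 = pochhammer (\<alpha> 1+real (n 1)+1) S / pochhammer (\<alpha> 1+\<beta>+real (n 1)+1) S"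
  proof -
    have "(\<Sum>j=1+1..Suc p. lcons a l j) = S" unfolding S_def using lcons_sum_tail[of 1 a l p] by simp
    then show ?thesis unfolding h_def by simp
  qed
  have P2: "(\<Prod>i=1..p. h i) = h 1 * (\<Prod>i=1..p-1. h' i)"
  proof (cases p)
    case 0
    then show ?thesis by (simp add: h_def)
  next
    case (Suc p')
    have "(\<Prod>i=1..p. h i) = h 1 * (\<Prod>i=1..p'. h (Suc i))"
      unfolding Suc prod_shift1 ..
    also have "(\<Prod>i=1..p'. h (Suc i)) = (\<Prod>i=1..p-1. h' i)"
    proof (rule prod.cong)
      show "{1..p'} = {1..p-1}" using Suc by simp
      fix i assume i: "i \<in> {1..p-1}"
      then have i1: "1 \<le> Suc i" by simp
      have "(\<Sum>j=Suc i+1..Suc p. lcons a l j) = (\<Sum>j=i+1..p. l j)"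
        using lcons_sum_tail[OF i1, of a l p] by simp
      then show "h (Suc i) = h' i"
        unfolding h_def h'_def arg_shift by simp
    qed
    finally show ?thesis .
  qed
  show ?thesis unfolding K1 K2 P1 P2 f1 h1 by (simp add: ac_simps)
qed




lemma lbox_0: "lbox 0 n = {\<lambda>_. 0}"
  by (auto simp: lbox_def fun_eq_iff)

lemma lbox_le: "l \<in> lbox p n \<Longrightarrow> (\<Sum>i=1..p. l i) \<le> (\<Sum>i=1..p. n i)"
  by (auto simp: lbox_def intro!: sum_mono)

lemma coreD:
  fixes \<alpha> :: "nat \<Rightarrow> real" and n :: "nat \<Rightarrow> nat" and \<beta> x :: real
  assumes "pochhammer (x+\<beta>+1) (\<Sum>i=1..p. n i) \<noteq> 0"
    and "\<forall>l\<in>lbox p n. \<forall>i\<in>{1..p}. pochhammer (\<alpha> i + 1) (\<Sum>j=i..p. l j) \<noteq> 0"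
    and "\<forall>l\<in>lbox p n. \<forall>i\<in>{1..p-1}. pochhammer (\<alpha> i + \<beta> + real (\<Sum>k=1..i. n k) + 1) (\<Sum>j=i+1..p. l j) \<noteq> 0"
  shows "(\<Sum>l\<in>lbox p n. pochhammer x (\<Sum>i=1..p. l i) / pochhammer (x+\<beta>+1) (\<Sum>i=1..p. l i) * Kc p \<alpha> \<beta> n l)
       = pochhammer (\<beta>+1) (\<Sum>i=1..p. n i) / pochhammer (x+\<beta>+1) (\<Sum>i=1..p. n i)
         * (\<Prod>q=1..p. pochhammer (\<alpha> q - x + 1) (n q))"
  using assms
proof (induction p arbitrary: \<alpha> \<beta> n)
  case 0
  then show ?case by (simp add: lbox_0 Kc_def)
next
  case (Suc p)
  define n' where "n' = (\<lambda>i. n (Suc i))"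
  define \<alpha>' where "\<alpha>' = (\<lambda>i. \<alpha> (Suc i))"
  define \<beta>' where "\<beta>' = \<beta> + real (n 1)"
  define m' where "m' = (\<Sum>i=1..p. n' i)"
  have mSuc: "(\<Sum>i=1..Suc p. n i) = n 1 + m'" unfolding m'_def n'_def sum_shift1 ..
  define C0 where "C0 = pochhammer (\<beta>+1) (n 1) * pochhammer (\<alpha> 1 - x + 1) (n 1) / pochhammer (x+\<beta>+1) (n 1)"
  define G where "G = (\<lambda>l. pochhammer x (\<Sum>i=1..p. l i) / pochhammer (x+\<beta>'+1) (\<Sum>i=1..p. l i) * Kc p \<alpha>' \<beta>' n' l)"
  have A1: "pochhammer (x+\<beta>+1) (n 1 + m') \<noteq> 0" using Suc.prems(1) mSuc by simp
  have inner: "(\<Sum>a\<le>n 1. pochhammer x (\<Sum>i=1..Suc p. lcons a l i) / pochhammer (x+\<beta>+1) (\<Sum>i=1..Suc p. lcons a l i)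
                  * Kc (Suc p) \<alpha> \<beta> n (lcons a l)) = C0 * G l"
    if l: "l \<in> lbox p n'" for l
  proof -
    define S where "S = (\<Sum>j=1..p. l j)"
    have Sle: "S \<le> m'" using lbox_le[OF l] by (simp add: S_def m'_def)
    have h1: "pochhammer (x+\<beta>+1) (n 1 + S) \<noteq> 0"
      using A1 Sle pochhammer_neq_0_mono by fastforce
    have lc: "lcons (n 1) l \<in> lbox (Suc p) n" using lcons_in[of "n 1" n l p] l by (simp add: n'_def)
    have h2: "pochhammer (\<alpha> 1 + 1) (n 1 + S) \<noteq> 0"
      using Suc.prems(2) lc lcons_sum_all[of "n 1" l p] by (force simp: S_def)
    have h3: "pochhammer (\<alpha> 1 + \<beta> + real (n 1) + 1) S \<noteq> 0"
    proof (cases p)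
      case 0 then show ?thesis by (simp add: S_def)
    next
      case (Suc p')
      have "1 \<in> {1..Suc p - 1}" using Suc by simp
      with Suc.prems(3) lc have "pochhammer (\<alpha> 1 + \<beta> + real (\<Sum>k=1..1. n k) + 1) (\<Sum>j=1+1..Suc p. lcons (n 1) l j) \<noteq> 0"
        by blast
      moreover have "(\<Sum>j=1+1..Suc p. lcons (n 1) l j) = S"
        using lcons_sum_tail[of 1 "n 1" l p] by (simp add: S_def)
      ultimately show ?thesis by simp
    qed
    have "(\<Sum>a\<le>n 1. pochhammer x (\<Sum>i=1..Suc p. lcons a l i) / pochhammer (x+\<beta>+1) (\<Sum>i=1..Suc p. lcons a l i)
                  * Kc (Suc p) \<alpha> \<beta> n (lcons a l))
        = (\<Sum>a\<le>n 1. pochhammer x (a+S) / pochhammer (x+\<beta>+1) (a+S) *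
            (pochhammer (\<alpha> 1+1) (n 1) * (pochhammer (-real (n 1)) a / fact a)
             * (pochhammer (\<alpha> 1+\<beta>+real (n 1)+1) (a+S) / pochhammer (\<alpha> 1+1) (a+S))
             * (pochhammer (\<alpha> 1+real (n 1)+1) S / pochhammer (\<alpha> 1+\<beta>+real (n 1)+1) S))) * Kc p \<alpha>' \<beta>' n' l"
      unfolding sum_distrib_right lcons_sum_all Kc_Suc
      by (simp add: S_def \<alpha>'_def \<beta>'_def n'_def mult.assoc)
    also have "\<dots> = pochhammer x S / pochhammer (x+(\<beta>+real (n 1))+1) S * C0 * Kc p \<alpha>' \<beta>' n' l"
      unfolding step[OF h1 h2 h3] C0_def by simp
    also have "\<dots> = C0 * G l" unfolding G_def S_def \<beta>'_def by (simp add: ac_simps)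
    finally show ?thesis .
  qed
  have "(\<Sum>l\<in>lbox (Suc p) n. pochhammer x (\<Sum>i=1..Suc p. l i) / pochhammer (x+\<beta>+1) (\<Sum>i=1..Suc p. l i) * Kc (Suc p) \<alpha> \<beta> n l)
      = (\<Sum>l\<in>lbox p n'. C0 * G l)"
    unfolding sum_lbox_Suc n'_def[symmetric]
    by (subst sum.swap) (rule sum.cong[OF refl], rule inner)
  also have "\<dots> = C0 * (pochhammer (\<beta>'+1) m' / pochhammer (x+\<beta>'+1) m' * (\<Prod>q=1..p. pochhammer (\<alpha>' q - x + 1) (n' q)))"
  proof -
    have B1: "pochhammer (x+\<beta>'+1) (\<Sum>i=1..p. n' i) \<noteq> 0"
      using A1 pochhammer_product'[of "x+\<beta>+1" "n 1" m'] by (auto simp: m'_def \<beta>'_def add_ac)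
    have B2: "\<forall>l\<in>lbox p n'. \<forall>i\<in>{1..p}. pochhammer (\<alpha>' i + 1) (\<Sum>j=i..p. l j) \<noteq> 0"
    proof (intro ballI)
      fix l i assume l: "l \<in> lbox p n'" and i: "i \<in> {1..p}"
      have lc: "lcons 0 l \<in> lbox (Suc p) n" using lcons_in[of 0 n l p] l by (simp add: n'_def)
      have "Suc i \<in> {1..Suc p}" using i by simp
      with Suc.prems(2) lc have "pochhammer (\<alpha> (Suc i) + 1) (\<Sum>j=Suc i..Suc p. lcons 0 l j) \<noteq> 0" by blast
      then show "pochhammer (\<alpha>' i + 1) (\<Sum>j=i..p. l j) \<noteq> 0"
        using lcons_sum_tail[of i 0 l p] i by (simp add: \<alpha>'_def)
    qed
    have B3: "\<forall>l\<in>lbox p n'. \<forall>i\<in>{1..p-1}. pochhammer (\<alpha>' i + \<beta>' + real (\<Sum>k=1..i. n' k) + 1) (\<Sum>j=i+1..p. l j) \<noteq> 0"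
    proof (intro ballI)
      fix l i assume l: "l \<in> lbox p n'" and i: "i \<in> {1..p-1}"
      have lc: "lcons 0 l \<in> lbox (Suc p) n" using lcons_in[of 0 n l p] l by (simp add: n'_def)
      have "1 \<le> i" "i \<le> p - 1" using i by auto
      then have "Suc i \<in> {1..Suc p - 1}" by simp
      with Suc.prems(3) lc have "pochhammer (\<alpha> (Suc i) + \<beta> + real (\<Sum>k=1..Suc i. n k) + 1) (\<Sum>j=Suc i+1..Suc p. lcons 0 l j) \<noteq> 0"
        by blast
      moreover have "(\<Sum>j=Suc i+1..Suc p. lcons 0 l j) = (\<Sum>j=i+1..p. l j)"
        using lcons_sum_tail[of "Suc i" 0 l p] by simp
      ultimately show "pochhammer (\<alpha>' i + \<beta>' + real (\<Sum>k=1..i. n' k) + 1) (\<Sum>j=i+1..p. l j) \<noteq> 0"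
        unfolding arg_shift \<alpha>'_def \<beta>'_def n'_def by simp
    qed
    show ?thesis
      using Suc.IH[OF B1 B2 B3] unfolding G_def m'_def sum_distrib_left[symmetric] by simp
  qed
  also have "\<dots> = pochhammer (\<beta>+1) (\<Sum>i=1..Suc p. n i) / pochhammer (x+\<beta>+1) (\<Sum>i=1..Suc p. n i)
         * (\<Prod>q=1..Suc p. pochhammer (\<alpha> q - x + 1) (n q))"
  proof -
    have e1: "pochhammer (\<beta>+1) (n 1 + m') = pochhammer (\<beta>+1) (n 1) * pochhammer (\<beta>'+1) m'"
      using pochhammer_product'[of "\<beta>+1" "n 1" m'] by (simp add: \<beta>'_def add_ac)
    have e2: "pochhammer (x+\<beta>+1) (n 1 + m') = pochhammer (x+\<beta>+1) (n 1) * pochhammer (x+\<beta>'+1) m'"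
      using pochhammer_product'[of "x+\<beta>+1" "n 1" m'] by (simp add: \<beta>'_def add_ac)
    show ?thesis unfolding mSuc e1 e2 prod_shift1 C0_def \<alpha>'_def n'_def
      by (simp add: divide_inverse inverse_mult_distrib ac_simps)
  qed
  finally show ?case .
qed




lemma pointwise:
  fixes x \<beta> :: real
  assumes n1: "pochhammer (x+\<beta>+1) L \<noteq> 0" and n2: "pochhammer (x+\<beta>+2) L \<noteq> 0" and b: "\<beta> + 1 \<noteq> 0"
  shows "pochhammer x L / pochhammer (x+\<beta>+2) L
       = ((x+\<beta>+1) * (pochhammer x L / pochhammer (x+\<beta>+1) L) - x * (pochhammer (x+1) L / pochhammer (x+\<beta>+2) L)) / (\<beta>+1)"
proof -
  have e1: "(x+\<beta>+1) * pochhammer (x+\<beta>+2) L = pochhammer (x+\<beta>+1) L * (x+\<beta>+1+real L)"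
    using pochhammer_rec[of "x+\<beta>+1" L] pochhammer_Suc[of "x+\<beta>+1" L] by (simp add: add_ac)
  have e2: "x * pochhammer (x+1) L = pochhammer x L * (x + real L)"
    using pochhammer_rec[of x L] pochhammer_Suc[of x L] by simp
  have "(x+\<beta>+1) * (pochhammer x L / pochhammer (x+\<beta>+1) L) = pochhammer x L * (x+\<beta>+1+real L) / pochhammer (x+\<beta>+2) L"
  proof -
    have "(x+\<beta>+1) / pochhammer (x+\<beta>+1) L = (x+\<beta>+1+real L) / pochhammer (x+\<beta>+2) L"
      using e1 n1 n2 by (simp add: divide_simps)
    then show ?thesis by (simp add: divide_inverse ac_simps)
  qed
  moreover have "x * (pochhammer (x+1) L / pochhammer (x+\<beta>+2) L) = pochhammer x L * (x + real L) / pochhammer (x+\<beta>+2) L"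
    using e2 by (simp add: divide_inverse ac_simps)
  ultimately have "(x+\<beta>+1) * (pochhammer x L / pochhammer (x+\<beta>+1) L) - x * (pochhammer (x+1) L / pochhammer (x+\<beta>+2) L)
      = (pochhammer x L * (x+\<beta>+1+real L) - pochhammer x L * (x + real L)) / pochhammer (x+\<beta>+2) L"
    by (simp add: diff_divide_distrib)
  also have "pochhammer x L * (x+\<beta>+1+real L) - pochhammer x L * (x + real L) = pochhammer x L * (\<beta>+1)"
    by (simp add: algebra_simps)
  finally have "(x+\<beta>+1) * (pochhammer x L / pochhammer (x+\<beta>+1) L) - x * (pochhammer (x+1) L / pochhammer (x+\<beta>+2) L)
      = pochhammer x L * (\<beta>+1) / pochhammer (x+\<beta>+2) L" .
  then show ?thesis using b by simp
qed

lemma final_alg: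
  fixes b c xx B2 Dm D1 P1 P0 :: real
  assumes eB: "Bm = (b+1) * B2" and eD: "D1 * (c + m) = c * Dm"
    and nz: "b + 1 \<noteq> 0" "c \<noteq> 0" "D1 \<noteq> 0" "Dm \<noteq> 0"
  shows "(c * (Bm / D1 * P1) - xx * (Bm / Dm * P0)) / (b+1) = B2 / Dm * ((c + m) * P1 - xx * P0)"
proof -
  have cD: "c / D1 = (c+m)/Dm" using eD nz by (simp add: divide_simps) (simp add: ac_simps)
  have "c * (Bm / D1 * P1) = (c / D1) * Bm * P1" by (simp add: divide_inverse ac_simps)
  also have "\<dots> = (c+m) * P1 * Bm / Dm" unfolding cD by (simp add: divide_inverse ac_simps)
  finally have t1: "c * (Bm / D1 * P1) = (c+m) * P1 * Bm / Dm" .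
  have t2: "xx * (Bm / Dm * P0) = xx * P0 * Bm / Dm" by (simp add: divide_inverse ac_simps)
  have "(c * (Bm / D1 * P1) - xx * (Bm / Dm * P0)) / (b+1) = ((c+m) * P1 - xx * P0) * ((b+1) * B2) / (Dm * (b+1))"
  proof -
    have "(c * (Bm / D1 * P1) - xx * (Bm / Dm * P0)) / (b+1) = ((c+m) * P1 * Bm / Dm - xx * P0 * Bm / Dm) / (b+1)"
      unfolding t1 t2 ..
    also have "\<dots> = ((c+m) * P1 - xx * P0) * Bm / (Dm * (b+1))"
      by (simp add: diff_divide_distrib[symmetric] left_diff_distrib)
    finally show ?thesis unfolding eB .
  qed
  also have "\<dots> = B2 / Dm * ((c + m) * P1 - xx * P0)" using nz by (simp add: divide_inverse ac_simps)
  finally show ?thesis .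
qed

lemma divMP:
  fixes \<alpha> :: "nat \<Rightarrow> real" and n :: "nat \<Rightarrow> nat" and \<beta> x :: real
  assumes m1: "(\<Sum>i=1..p. n i) \<ge> 1"
    and hx2: "pochhammer (x+\<beta>+2) (\<Sum>i=1..p. n i) \<noteq> 0"
    and hb: "\<beta>+1 \<noteq> 0" and hxb: "x+\<beta>+1 \<noteq> 0"
    and A2: "\<forall>l\<in>lbox p n. \<forall>i\<in>{1..p}. pochhammer (\<alpha> i + 1) (\<Sum>j=i..p. l j) \<noteq> 0"
    and A3: "\<forall>l\<in>lbox p n. \<forall>i\<in>{1..p-1}. pochhammer (\<alpha> i + \<beta> + real (\<Sum>k=1..i. n k) + 1) (\<Sum>j=i+1..p. l j) \<noteq> 0"
  shows "(\<Sum>l\<in>lbox p n. pochhammer x (\<Sum>i=1..p. l i) / pochhammer (x+\<beta>+2) (\<Sum>i=1..p. l i) * Kc p \<alpha> \<beta> n l)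
       = pochhammer (\<beta>+2) ((\<Sum>i=1..p. n i) - 1) / pochhammer (x+\<beta>+2) (\<Sum>i=1..p. n i)
         * ((x+\<beta>+real (\<Sum>i=1..p. n i)+1) * (\<Prod>q=1..p. pochhammer (\<alpha> q - x + 1) (n q))
            - x * (\<Prod>q=1..p. pochhammer (\<alpha> q - x) (n q)))"
proof -
  define m where "m = (\<Sum>i=1..p. n i)"
  define P1 where "P1 = (\<Prod>q=1..p. pochhammer (\<alpha> q - x + 1) (n q))"
  define P0 where "P0 = (\<Prod>q=1..p. pochhammer (\<alpha> q - x) (n q))"
  have mS: "m = Suc (m - 1)" using m1 by (simp add: m_def)
  have D1S: "pochhammer (x+\<beta>+1) m = (x+\<beta>+1) * pochhammer (x+\<beta>+2) (m-1)"
    by (subst mS, subst pochhammer_rec) (simp add: add_ac)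
  have hx2': "pochhammer (x+\<beta>+2) m \<noteq> 0" using hx2 by (simp add: m_def)
  have D1: "pochhammer (x+\<beta>+1) m \<noteq> 0"
    unfolding D1S using hxb hx2' pochhammer_neq_0_mono[of "x+\<beta>+2" m "m-1"] by auto
  have C1: "(\<Sum>l\<in>lbox p n. pochhammer x (\<Sum>i=1..p. l i) / pochhammer (x+\<beta>+1) (\<Sum>i=1..p. l i) * Kc p \<alpha> \<beta> n l)
       = pochhammer (\<beta>+1) m / pochhammer (x+\<beta>+1) m * P1"
    using coreD[where x=x and \<beta>=\<beta> and p=p and n=n and \<alpha>=\<alpha>] D1 A2 A3 by (simp add: m_def P1_def)
  have e12: "x + 1 + \<beta> + 1 = x + \<beta> + 2" by simp
  have C2: "(\<Sum>l\<in>lbox p n. pochhammer (x+1) (\<Sum>i=1..p. l i) / pochhammer (x+\<beta>+2) (\<Sum>i=1..p. l i) * Kc p \<alpha> \<beta> n l)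
       = pochhammer (\<beta>+1) m / pochhammer (x+\<beta>+2) m * P0"
  proof -
    have "pochhammer (x + 1 + \<beta> + 1) (\<Sum>i=1..p. n i) \<noteq> 0" unfolding e12 by (rule hx2)
    from coreD[where x="x+1" and \<beta>=\<beta> and p=p and n=n and \<alpha>=\<alpha>, OF this A2 A3] show ?thesis
      unfolding e12 by (simp add: m_def P0_def)
  qed
  have "(\<Sum>l\<in>lbox p n. pochhammer x (\<Sum>i=1..p. l i) / pochhammer (x+\<beta>+2) (\<Sum>i=1..p. l i) * Kc p \<alpha> \<beta> n l)
     = (\<Sum>l\<in>lbox p n. ((x+\<beta>+1) * (pochhammer x (\<Sum>i=1..p. l i) / pochhammer (x+\<beta>+1) (\<Sum>i=1..p. l i) * Kc p \<alpha> \<beta> n l)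
          - x * (pochhammer (x+1) (\<Sum>i=1..p. l i) / pochhammer (x+\<beta>+2) (\<Sum>i=1..p. l i) * Kc p \<alpha> \<beta> n l)) / (\<beta>+1))"
  proof (rule sum.cong[OF refl])
    fix l assume l: "l \<in> lbox p n"
    have Lm: "(\<Sum>i=1..p. l i) \<le> m" using lbox_le[OF l] by (simp add: m_def)
    have n1: "pochhammer (x+\<beta>+1) (\<Sum>i=1..p. l i) \<noteq> 0" using D1 Lm pochhammer_neq_0_mono by blast
    have n2: "pochhammer (x+\<beta>+2) (\<Sum>i=1..p. l i) \<noteq> 0" using hx2' Lm pochhammer_neq_0_mono by blast
    show "pochhammer x (\<Sum>i=1..p. l i) / pochhammer (x+\<beta>+2) (\<Sum>i=1..p. l i) * Kc p \<alpha> \<beta> n l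
       = ((x+\<beta>+1) * (pochhammer x (\<Sum>i=1..p. l i) / pochhammer (x+\<beta>+1) (\<Sum>i=1..p. l i) * Kc p \<alpha> \<beta> n l)
          - x * (pochhammer (x+1) (\<Sum>i=1..p. l i) / pochhammer (x+\<beta>+2) (\<Sum>i=1..p. l i) * Kc p \<alpha> \<beta> n l)) / (\<beta>+1)"
      unfolding pointwise[OF n1 n2 hb]
      by (simp add: divide_inverse algebra_simps)
  qed
  also have "\<dots> = ((x+\<beta>+1) * (pochhammer (\<beta>+1) m / pochhammer (x+\<beta>+1) m * P1)
         - x * (pochhammer (\<beta>+1) m / pochhammer (x+\<beta>+2) m * P0)) / (\<beta>+1)"
    unfolding C1[symmetric] C2[symmetric]
    by (simp add: sum_divide_distrib[symmetric] sum_subtractf sum_distrib_left)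
  also have "\<dots> = pochhammer (\<beta>+2) (m-1) / pochhammer (x+\<beta>+2) m * ((x+\<beta>+1 + real m) * P1 - x * P0)"
  proof (rule final_alg)
    show "pochhammer (\<beta>+1) m = (\<beta>+1) * pochhammer (\<beta>+2) (m-1)"
      by (subst mS, subst pochhammer_rec) (simp add: add_ac)
    show "pochhammer (x+\<beta>+1) m * (x+\<beta>+1 + real m) = (x+\<beta>+1) * pochhammer (x+\<beta>+2) m"
      using pochhammer_Suc[of "x+\<beta>+1" m] pochhammer_rec[of "x+\<beta>+1" m] by (simp add: add_ac)
  qed (use hb hxb D1 hx2' in auto)
  finally show ?thesis by (simp add: m_def P1_def P0_def add_ac)
qed

lemma prod_aux: "(\<Prod>i\<in>I. a i / d i * b i * c i) = (\<Prod>i\<in>I. a i * b i * c i) / (\<Prod>i\<in>I. d i)"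
  for a b c d :: "nat \<Rightarrow> real"
  by (subst prod_dividef[symmetric]) (simp add: ac_simps divide_inverse)

lemma Ccoef_eq: "Ccoef p N \<alpha> \<beta> n l = pochhammer (-real N) (\<Sum>i=1..p. n i) / pochhammer (-real N) (\<Sum>i=1..p. l i)
   * (Kc p \<alpha> \<beta> n l / (\<Prod>i=1..p. pochhammer (\<alpha> i + \<beta> + real (\<Sum>k=1..p. n k) + 1) (n i)))"
  unfolding Ccoef_def Kc_def prod_aux by (simp add: divide_inverse ac_simps)

lemma final_gen:
  fixes p N :: nat and n :: "nat \<Rightarrow> nat" and \<alpha> :: "nat \<Rightarrow> real" and \<beta> x :: real
  assumes hn1: "absn p n \<ge> 1"
    and hden_x2: "pochhammer (x + \<beta> + 2) (absn p n) \<noteq> 0"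
    and hden_N: "\<forall>l\<in>lbox p n. pochhammer (- real N) (\<Sum>i=1..p. l i) \<noteq> 0"
    and hden_c: "\<forall>l\<in>lbox p n. \<forall>i\<in>{1..p}. pochhammer (\<alpha> i + 1) (\<Sum>j=i..p. l j) \<noteq> 0"
    and hden_d: "\<forall>l\<in>lbox p n. \<forall>i\<in>{1..p-1}.
        pochhammer (\<alpha> i + \<beta> + real (\<Sum>k=1..i. n k) + 1) (\<Sum>j=i+1..p. l j) \<noteq> 0"
    and hb: "\<beta> + 1 \<noteq> 0" and hxb: "x + \<beta> + 1 \<noteq> 0"
  shows "(\<Sum>l\<in>lbox p n.
            pochhammer (- real N) (\<Sum>i=1..p. l i) * pochhammer x (\<Sum>i=1..p. l i)
            / pochhammer (x + \<beta> + 2) (\<Sum>i=1..p. l i) * Ccoef p N \<alpha> \<beta> n l)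
       = pochhammer (\<beta> + 2) (absn p n - 1) * pochhammer (- real N) (absn p n)
         / (pochhammer (x + \<beta> + 2) (absn p n)
            * (\<Prod>q=1..p. pochhammer (\<alpha> q + \<beta> + real (absn p n) + 1) (n q)))
         * ((x + \<beta> + real (absn p n) + 1) * (\<Prod>q=1..p. pochhammer (\<alpha> q - x + 1) (n q))
            - x * (\<Prod>q=1..p. pochhammer (\<alpha> q - x) (n q)))"
proof -
  define m where "m = (\<Sum>i=1..p. n i)"
  define PD where "PD = (\<Prod>i=1..p. pochhammer (\<alpha> i + \<beta> + real m + 1) (n i))"
  have am: "absn p n = m" by (simp add: absn_def m_def)
  have "(\<Sum>l\<in>lbox p n.
            pochhammer (- real N) (\<Sum>i=1..p. l i) * pochhammer x (\<Sum>i=1..p. l i)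
            / pochhammer (x + \<beta> + 2) (\<Sum>i=1..p. l i) * Ccoef p N \<alpha> \<beta> n l)
      = (\<Sum>l\<in>lbox p n. pochhammer (-real N) m / PD *
            (pochhammer x (\<Sum>i=1..p. l i) / pochhammer (x+\<beta>+2) (\<Sum>i=1..p. l i) * Kc p \<alpha> \<beta> n l))"
  proof (rule sum.cong[OF refl])
    fix l assume l: "l \<in> lbox p n"
    have nz: "pochhammer (- real N) (\<Sum>i=1..p. l i) \<noteq> 0" using hden_N l by blast
    show "pochhammer (- real N) (\<Sum>i=1..p. l i) * pochhammer x (\<Sum>i=1..p. l i)
            / pochhammer (x + \<beta> + 2) (\<Sum>i=1..p. l i) * Ccoef p N \<alpha> \<beta> n l
       = pochhammer (-real N) m / PD *
            (pochhammer x (\<Sum>i=1..p. l i) / pochhammer (x+\<beta>+2) (\<Sum>i=1..p. l i) * Kc p \<alpha> \<beta> n l)"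
      unfolding Ccoef_eq PD_def m_def using nz by (simp add: divide_inverse ac_simps)
  qed
  also have "\<dots> = pochhammer (-real N) m / PD *
      (pochhammer (\<beta>+2) (m - 1) / pochhammer (x+\<beta>+2) m
         * ((x+\<beta>+real m+1) * (\<Prod>q=1..p. pochhammer (\<alpha> q - x + 1) (n q))
            - x * (\<Prod>q=1..p. pochhammer (\<alpha> q - x) (n q))))"
    unfolding sum_distrib_left[symmetric] m_def
    by (rule arg_cong[where f="\<lambda>t. _ * t"], rule divMP)
       (use hn1 hden_x2 hb hxb hden_c hden_d in \<open>auto simp: absn_def\<close>)
  finally show ?thesis unfolding am PD_def by (simp add: divide_inverse ac_simps)
qed




lemma isCont_pochhammer_comp [continuous_intros]:
  "isCont f a \<Longrightarrow> isCont (\<lambda>b. pochhammer (f b :: real) k) a"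
  by (rule isCont_o2[OF _ isCont_pochhammer])

lemma cont_zero:
  fixes F :: "real \<Rightarrow> real"
  assumes "isCont F a" "\<forall>\<^sub>F b in at a. F b = 0"
  shows "F a = 0"
proof -
  have "(F \<longlongrightarrow> F a) (at a)" using assms(1) by (simp add: isCont_def)
  moreover have "(F \<longlongrightarrow> 0) (at a)" using tendsto_eventually[OF assms(2)] by simp
  ultimately show ?thesis using tendsto_unique[OF at_neq_bot] by blast
qed

lemma ev_ne:
  fixes g :: "real \<Rightarrow> real"
  assumes "isCont g a" "g a \<noteq> 0"
  shows "\<forall>\<^sub>F b in at a. g b \<noteq> 0"
  using assms tendsto_imp_eventually_ne[of g "g a" "at a" 0] by (simp add: isCont_def)

theorem mainTheorem2:
  fixes p N :: nat and n :: "nat \<Rightarrow> nat" and \<alpha> :: "nat \<Rightarrow> real" and \<beta> x :: real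
  assumes hp: "p \<ge> 1"
    and hn1: "absn p n \<ge> 1"
    and hnN: "absn p n \<le> N"
    and hden_x: "\<forall>l\<in>lbox p n. pochhammer (x + \<beta> + 2) (\<Sum>i=1..p. l i) \<noteq> 0"
    and hden_x2: "pochhammer (x + \<beta> + 2) (absn p n) \<noteq> 0"
    and hden_N: "\<forall>l\<in>lbox p n. pochhammer (- real N) (\<Sum>i=1..p. l i) \<noteq> 0"
    and hden_a: "\<forall>i\<in>{1..p}. pochhammer (\<alpha> i + \<beta> + real (absn p n) + 1) (n i) \<noteq> 0"
    and hden_b: "\<forall>l\<in>lbox p n. \<forall>i\<in>{1..p}.
        pochhammer (\<alpha> i + \<beta> + real (\<Sum>k=1..i. n k) + 1) (\<Sum>j=i..p. l j) \<noteq> 0"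
    and hden_c: "\<forall>l\<in>lbox p n. \<forall>i\<in>{1..p}. pochhammer (\<alpha> i + 1) (\<Sum>j=i..p. l j) \<noteq> 0"
    and hden_d: "\<forall>l\<in>lbox p n. \<forall>i\<in>{1..p-1}.
        pochhammer (\<alpha> i + \<beta> + real (\<Sum>k=1..i. n k) + 1) (\<Sum>j=i+1..p. l j) \<noteq> 0"
  shows "(\<Sum>l\<in>lbox p n.
            pochhammer (- real N) (\<Sum>i=1..p. l i) * pochhammer x (\<Sum>i=1..p. l i)
            / pochhammer (x + \<beta> + 2) (\<Sum>i=1..p. l i) * Ccoef p N \<alpha> \<beta> n l)
       = pochhammer (\<beta> + 2) (absn p n - 1) * pochhammer (- real N) (absn p n)
         / (pochhammer (x + \<beta> + 2) (absn p n)
            * (\<Prod>q=1..p. pochhammer (\<alpha> q + \<beta> + real (absn p n) + 1) (n q)))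
         * ((x + \<beta> + real (absn p n) + 1) * (\<Prod>q=1..p. pochhammer (\<alpha> q - x + 1) (n q))
            - x * (\<Prod>q=1..p. pochhammer (\<alpha> q - x) (n q)))"
proof -
  define F where "F = (\<lambda>b. (\<Sum>l\<in>lbox p n.
            pochhammer (- real N) (\<Sum>i=1..p. l i) * pochhammer x (\<Sum>i=1..p. l i)
            / pochhammer (x + b + 2) (\<Sum>i=1..p. l i) * Ccoef p N \<alpha> b n l)
       - pochhammer (b + 2) (absn p n - 1) * pochhammer (- real N) (absn p n)
         / (pochhammer (x + b + 2) (absn p n)
            * (\<Prod>q=1..p. pochhammer (\<alpha> q + b + real (absn p n) + 1) (n q)))
         * ((x + b + real (absn p n) + 1) * (\<Prod>q=1..p. pochhammer (\<alpha> q - x + 1) (n q))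
            - x * (\<Prod>q=1..p. pochhammer (\<alpha> q - x) (n q))))"
  have cont: "isCont F \<beta>"
    unfolding F_def Ccoef_def
    apply (intro continuous_intros)
    using hden_x hden_a hden_c hden_d hden_x2 by (auto simp: absn_def prod_zero_iff)
  have e1: "\<forall>\<^sub>F b in at \<beta>. b \<noteq> -1" by (rule eventually_neq_at_within)
  have e2: "\<forall>\<^sub>F b in at \<beta>. b \<noteq> -x-1" by (rule eventually_neq_at_within)
  have e3: "\<forall>\<^sub>F b in at \<beta>. pochhammer (x + b + 2) (absn p n) \<noteq> 0"
    by (rule ev_ne[where g="\<lambda>b. pochhammer (x + b + 2) (absn p n)", OF _ hden_x2]) (intro continuous_intros)
  have e4: "\<forall>\<^sub>F b in at \<beta>. \<forall>l\<in>lbox p n. \<forall>i\<in>{1..p-1}.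
        pochhammer (\<alpha> i + b + real (\<Sum>k=1..i. n k) + 1) (\<Sum>j=i+1..p. l j) \<noteq> 0"
  proof (intro eventually_ball_finite finite_lbox ballI finite_atLeastAtMost)
    fix l i assume l: "l \<in> lbox p n" and i: "i \<in> {1..p-1}"
    show "\<forall>\<^sub>F b in at \<beta>. pochhammer (\<alpha> i + b + real (\<Sum>k=1..i. n k) + 1) (\<Sum>j=i+1..p. l j) \<noteq> 0"
      by (rule ev_ne[where g="\<lambda>b. pochhammer (\<alpha> i + b + real (\<Sum>k=1..i. n k) + 1) (\<Sum>j=i+1..p. l j)"])
         (use hden_d l i in \<open>auto intro!: continuous_intros\<close>)
  qed
  have ev: "\<forall>\<^sub>F b in at \<beta>. F b = 0"
    using e1 e2 e3 e4
  proof eventually_elim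
    case (elim b)
    have hb: "b + 1 \<noteq> 0" using elim(1) by linarith
    have hxb: "x + b + 1 \<noteq> 0" using elim(2) by linarith
    show "F b = 0" unfolding F_def
      using final_gen[OF hn1 elim(3) hden_N hden_c elim(4) hb hxb] by simp
  qed
  have "F \<beta> = 0" by (rule cont_zero[OF cont ev])
  then show ?thesis by (simp add: F_def)
qed


end
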